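(* The functions $S=s^2$, $C=c^2$, $D=d^2$ satisfy $\partial^2(S')^2=4S(1-S)(1-\kappa^2S)$, $\partial^2(C')^2=4C(1-C)(\lambda^2+\kappa^2C)$, and $\partial^2(D')^2=4D(1-D)(D-\lambda^2)$.
   Context: Let $0<\kappa<1$ and $\lambda=\sqrt{1-\kappa^2}$. Let $F(\tfrac16,\tfrac56;\tfrac12;\cdot)$ denote the Gauss hypergeometric function. Define $u$ as a function of $\phi$ near $0$ by $u=\int_0^{\sin\phi}F(\tfrac16,\tfrac56;\tfrac12;\kappa^2t^2)\,\frac{dt}{\sqrt{1-t^2}}$; near the origin (fixing $0$) this inverts to a holomorphic function $u\mapsto\phi(u)$ with $\phi(0)=0$. Let $\psi$ be the holomorphic function near $0$ with $\psi(0)=0$ and $\sin\psi=\kappa\sin\phi$. Set $s=\sin\phi$, $c=\cos\phi$, $d=\cos\psi$, $\partial=\cos\tfrac23\psi$, as functions of $u$ on a small disc about $0$; primes denote $d/du$. *)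

theory Defs
  imports "HOL-Complex_Analysis.Complex_Analysis"
begin

definition gauss_hyp :: "complex \<Rightarrow> complex \<Rightarrow> complex \<Rightarrow> complex \<Rightarrow> complex" where
  "gauss_hyp a b c z =
     (\<Sum>n. (pochhammer a n * pochhammer b n / (pochhammer c n * fact n)) * z ^ n)"

definition F56 :: "complex \<Rightarrow> complex" where
  "F56 = gauss_hyp (1/6) (5/6) (1/2)"

text \<open>u as a function of phi:
  u = integral from 0 to sin phi of F(kappa^2 t^2) / sqrt(1 - t^2) dt
  (straight-line path, principal square root; meaningful for norm (sin phi) < 1).\<close>
definition u_of_phi :: "real \<Rightarrow> complex \<Rightarrow> complex" where
  "u_of_phi \<kappa> \<phi> = contour_integral (linepath 0 (sin \<phi>))
      (\<lambda>t. F56 (complex_of_real (\<kappa>\<^sup>2) * t\<^sup>2) / csqrt (1 - t\<^sup>2))"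

end

theory Submission
  imports Defs
begin

definition cF :: "nat \<Rightarrow> complex" where
  "cF n = pochhammer (1/6) n * pochhammer (5/6) n / (pochhammer (1/2) n * fact n)"

lemma F56_eq: "F56 w = (\<Sum>n. cF n * w ^ n)"
  by (simp add: F56_def gauss_hyp_def cF_def)

lemma poch_half_nz: "pochhammer (1/2 :: complex) n \<noteq> 0"
proof
  assume "pochhammer (1/2 :: complex) n = 0"
  then obtain k where "(1/2::complex) = - of_nat k" by (auto simp: pochhammer_eq_0_iff)
  then have "Re (1/2::complex) = Re (- of_nat k)" by (rule arg_cong)
  then have "(1/2::real) = - real k" by simp
  then show False by linarith
qed

lemma half_nz: "(1/2 + of_nat n :: complex) \<noteq> 0"
proof -
  have e: "(1/2 + of_nat n :: complex) = of_real (1/2 + real n)" by simp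
  have "(1/2 + real n) \<noteq> 0" by linarith
  then show ?thesis unfolding e of_real_eq_0_iff .
qed

lemma cF_Suc: "cF (Suc n) = cF n * ((1/6 + of_nat n)*(5/6 + of_nat n) / ((1/2 + of_nat n)*(of_nat n + 1)))"
proof -
  have h: "(1/2 + of_nat n :: complex) \<noteq> 0" by (rule half_nz)
  show ?thesis using poch_half_nz[of n] h
    by (simp add: cF_def pochhammer_Suc field_simps)
qed

lemma cF_rec: "of_nat (Suc n) * (1/2 + of_nat n) * cF (Suc n) = (of_nat n * of_nat n + of_nat n + 5/36) * cF n"
proof -
  have h: "(1/2 + of_nat n :: complex) \<noteq> 0" by (rule half_nz)
  have h2: "(of_nat n + 1 :: complex) \<noteq> 0" by (metis of_nat_Suc of_nat_eq_0_iff add.commute nat.distinct(1))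
  have "cF (Suc n) * ((1/2 + of_nat n)*(of_nat n + 1)) = cF n * ((1/6 + of_nat n)*(5/6 + of_nat n))"
    unfolding cF_Suc using h h2 by simp
  moreover have "(1/6 + of_nat n)*(5/6 + of_nat n) = (of_nat n * of_nat n + of_nat n + 5/36 :: complex)"
    by (simp add: field_simps)
  moreover have "of_nat (Suc n) * (1/2 + of_nat n) * cF (Suc n) = cF (Suc n) * ((1/2 + of_nat n)*(of_nat n + 1))"
    by (simp add: algebra_simps)
  ultimately show ?thesis by (metis mult.commute)
qed

lemma cF_0: "cF 0 = 1" by (simp add: cF_def)

lemma cF_norm: "norm (cF n) \<le> 1"
proof (induction n)
  case 0 then show ?case by (simp add: cF_0)
next
  case (Suc n)
  have e: "((1/6 + of_nat n)*(5/6 + of_nat n) / ((1/2 + of_nat n)*(of_nat n + 1)) :: complex)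
     = of_real ((1/6 + real n)*(5/6 + real n) / ((1/2 + real n)*(real n + 1)))" by simp
  have ineq: "(1/6 + real n)*(5/6 + real n) \<le> ((1/2 + real n)*(real n + 1))"
    by (simp add: field_simps)
  then have r: "norm (of_real ((1/6 + real n)*(5/6 + real n) / ((1/2 + real n)*(real n + 1))) :: complex) \<le> 1"
  proof -
    let ?x = "(1/6 + real n)*(5/6 + real n) / ((1/2 + real n)*(real n + 1))"
    have "0 \<le> ?x" by simp
    moreover have "?x \<le> 1" using ineq by (simp add: divide_le_eq_1)
    ultimately have "\<bar>?x\<bar> \<le> 1" by simp
    then show ?thesis by (simp only: norm_of_real)
  qed
  have "norm (cF (Suc n)) = norm (cF n) * norm (of_real ((1/6 + real n)*(5/6 + real n) / ((1/2 + real n)*(real n + 1))) :: complex)"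
    by (simp only: cF_Suc e norm_mult)
  also have "\<dots> \<le> 1 * 1" using Suc r by (intro mult_mono) auto
  finally show ?case by simp
qed

lemma cF_summable: "norm (w::complex) < 1 \<Longrightarrow> summable (\<lambda>n. cF n * w ^ n)"
proof (rule summable_comparison_test[where g="\<lambda>n. norm w ^ n"])
  assume "norm w < 1"
  show "\<exists>N. \<forall>n\<ge>N. norm (cF n * w ^ n) \<le> norm w ^ n"
    using cF_norm by (auto simp: norm_mult norm_power intro!: mult_left_le_one_le)
  show "summable (\<lambda>n. norm w ^ n)" using \<open>norm w < 1\<close> by simp
qed

definition F0 :: "complex \<Rightarrow> complex" where "F0 w = (\<Sum>n. cF n * w ^ n)"
definition F1 :: "complex \<Rightarrow> complex" where "F1 w = (\<Sum>n. diffs cF n * w ^ n)"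
definition F2 :: "complex \<Rightarrow> complex" where "F2 w = (\<Sum>n. diffs (diffs cF) n * w ^ n)"

lemma sm1: "norm (w::complex) < 1 \<Longrightarrow> summable (\<lambda>n. diffs cF n * w ^ n)"
  by (rule termdiff_converges[where K=1]) (auto intro: cF_summable)
lemma sm2: "norm (w::complex) < 1 \<Longrightarrow> summable (\<lambda>n. diffs (diffs cF) n * w ^ n)"
  by (rule termdiff_converges[where K=1]) (auto intro: sm1)

lemma dF0: "norm w < 1 \<Longrightarrow> (F0 has_field_derivative F1 w) (at w)"
  unfolding F0_def[abs_def] F1_def by (rule termdiffs_strong'[where K=1]) (auto intro: cF_summable)
lemma dF1: "norm w < 1 \<Longrightarrow> (F1 has_field_derivative F2 w) (at w)"
  unfolding F1_def[abs_def] F2_def by (rule termdiffs_strong'[where K=1]) (auto intro: sm1)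

lemma shift_sums:
  fixes d :: "nat \<Rightarrow> complex"
  assumes "(\<lambda>n. d (Suc n) * w ^ n) sums S" "d 0 = 0"
  shows "(\<lambda>n. d n * w ^ n) sums (w * S)"
proof -
  have "(\<lambda>n. w * (d (Suc n) * w ^ n)) sums (w * S)" by (rule sums_mult[OF assms(1)])
  moreover have "(\<lambda>n. w * (d (Suc n) * w ^ n)) = (\<lambda>n. (\<lambda>m. d m * w ^ m) (Suc n))"
    by (rule ext) (simp only: power_Suc mult.assoc mult.left_commute)
  ultimately have "(\<lambda>n. (\<lambda>m. d m * w ^ m) (Suc n)) sums (w * S)" by simp
  then have "(\<lambda>m. d m * w ^ m) sums (w * S + d 0 * w ^ 0)" by (rule sums_Suc_iff[THEN iffD1])
  then show ?thesis using assms(2) by simp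
qed

lemma F_ode:
  assumes w: "norm w < 1"
  shows "w * (1 - w) * F2 w + (1/2 - 2 * w) * F1 w - 5/36 * F0 w = 0"
proof -
  have s0: "(\<lambda>n. cF n * w^n) sums F0 w" unfolding F0_def using cF_summable[OF w] by (simp add: summable_sums)
  have s1: "(\<lambda>n. diffs cF n * w^n) sums F1 w" unfolding F1_def using sm1[OF w] by (simp add: summable_sums)
  have s2: "(\<lambda>n. diffs (diffs cF) n * w^n) sums F2 w" unfolding F2_def using sm2[OF w] by (simp add: summable_sums)
  have t1: "(\<lambda>n. (of_nat n * cF n) * w^n) sums (w * F1 w)"
    by (rule shift_sums) (use s1 in \<open>simp_all add: diffs_def\<close>)
  have t2: "(\<lambda>n. (of_nat n * diffs cF n) * w^n) sums (w * F2 w)"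
    by (rule shift_sums) (use s2 in \<open>simp_all add: diffs_def\<close>)
  have t3: "(\<lambda>n. (of_nat (n - 1) * diffs cF (n - 1)) * w^n) sums (w * (w * F2 w))"
    by (rule shift_sums) (use t2 in \<open>simp_all\<close>)
  have all: "(\<lambda>n. (of_nat n * diffs cF n) * w^n - (of_nat (n - 1) * diffs cF (n - 1)) * w^n
      + (1/2 * (diffs cF n * w^n) - 2 * ((of_nat n * cF n) * w^n)) - 5/36 * (cF n * w^n))
     sums (w * F2 w - w * (w * F2 w) + (1/2 * F1 w - 2 * (w * F1 w)) - 5/36 * F0 w)"
    by (intro sums_diff sums_add sums_mult t1 t2 t3 s0 s1)
  have z: "(of_nat n * diffs cF n) * w^n - (of_nat (n - 1) * diffs cF (n - 1)) * w^n
      + (1/2 * (diffs cF n * w^n) - 2 * ((of_nat n * cF n) * w^n)) - 5/36 * (cF n * w^n) = 0" for n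
  proof (cases n)
    case 0 then show ?thesis by (simp add: diffs_def cF_Suc cF_0)
  next
    case (Suc m)
    have r: "of_nat (Suc m) * (1/2 + of_nat m) * cF (Suc m) = (of_nat m * of_nat m + of_nat m + 5/36) * cF m"
      by (rule cF_rec)
    have r2: "of_nat (Suc n) * (1/2 + of_nat n) * cF (Suc n) = (of_nat n * of_nat n + of_nat n + 5/36) * cF n"
      by (rule cF_rec)
    have "(of_nat n * diffs cF n) * w^n - (of_nat (n - 1) * diffs cF (n - 1)) * w^n
      + (1/2 * (diffs cF n * w^n) - 2 * ((of_nat n * cF n) * w^n)) - 5/36 * (cF n * w^n)
      = w^n * (of_nat (Suc n) * (1/2 + of_nat n) * cF (Suc n) - (of_nat n * of_nat n + of_nat n + 5/36) * cF n)"
      unfolding Suc diffs_def by (simp add: algebra_simps divide_simps)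
    then show ?thesis using r2 by simp
  qed
  from all have "(\<lambda>n. 0) sums (w * F2 w - w * (w * F2 w) + (1/2 * F1 w - 2 * (w * F1 w)) - 5/36 * F0 w)"
    by (simp only: z)
  then have "w * F2 w - w * (w * F2 w) + (1/2 * F1 w - 2 * (w * F1 w)) - 5/36 * F0 w = 0"
    using sums_unique sums_zero by metis
  then show ?thesis by (simp add: algebra_simps)
qed

lemma F0_chain:
  assumes "(g has_field_derivative g') (at x within s)" "norm (g x) < 1"
  shows "((\<lambda>x. F0 (g x)) has_field_derivative F1 (g x) * g') (at x within s)"
  by (rule DERIV_chain2[OF dF0[OF assms(2)] assms(1)])

lemma F1_chain:
  assumes "(g has_field_derivative g') (at x within s)" "norm (g x) < 1"
  shows "((\<lambda>x. F1 (g x)) has_field_derivative F2 (g x) * g') (at x within s)"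
  by (rule DERIV_chain2[OF dF1[OF assms(2)] assms(1)])

lemma F0_chain':
  assumes "(g has_field_derivative g') (at x within s)" "norm (g x) < 1" "E = F1 (g x) * g'"
  shows "((\<lambda>x. F0 (g x)) has_field_derivative E) (at x within s)"
  using F0_chain[OF assms(1,2)] assms(3) by simp
lemma F1_chain':
  assumes "(g has_field_derivative g') (at x within s)" "norm (g x) < 1" "E = F2 (g x) * g'"
  shows "((\<lambda>x. F1 (g x)) has_field_derivative E) (at x within s)"
  using F1_chain[OF assms(1,2)] assms(3) by simp

definition KK :: "complex \<Rightarrow> complex" where "KK z = F0 (sin z ^ 2) * cos z"
definition K1 :: "complex \<Rightarrow> complex" where
  "K1 z = 2 * sin z * cos z ^ 2 * F1 (sin z ^ 2) - sin z * F0 (sin z ^ 2)"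

lemma norm_sin2: "norm (sin (z::complex)) < 1 \<Longrightarrow> norm (sin z ^ 2) < 1"
proof -
  assume a: "norm (sin (z::complex)) < 1"
  have "norm (sin z) * norm (sin z) < 1 * 1"
    using a by (intro mult_strict_mono) auto
  then show ?thesis by (simp add: norm_power power2_eq_square norm_mult)
qed

lemma dsin2: "((\<lambda>z. sin z ^ 2) has_field_derivative 2 * sin z * cos z) (at (z::complex))"
proof -
  have "((\<lambda>z. sin z * sin z) has_field_derivative cos z * sin z + cos z * sin z) (at z)"
    by (rule DERIV_mult[OF DERIV_sin DERIV_sin])
  then show ?thesis by (simp add: power2_eq_square algebra_simps)
qed

lemma dcos2: "((\<lambda>z. cos z ^ 2) has_field_derivative - 2 * sin z * cos z) (at (z::complex))"
proof -
  have "((\<lambda>z. cos z * cos z) has_field_derivative (- sin z) * cos z + (- sin z) * cos z) (at z)"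
    by (rule DERIV_mult[OF DERIV_cos DERIV_cos])
  then show ?thesis by (simp add: power2_eq_square algebra_simps)
qed

lemma dKK: assumes "norm (sin z) < 1" shows "(KK has_field_derivative K1 z) (at z)"
proof -
  have w: "norm (sin z ^ 2) < 1" using norm_sin2[OF assms] .
  have a: "((\<lambda>z. F0 (sin z ^ 2)) has_field_derivative F1 (sin z ^ 2) * (2 * sin z * cos z)) (at z)"
    by (rule F0_chain[OF dsin2 w])
  have "((\<lambda>z. F0 (sin z ^ 2) * cos z) has_field_derivative
        (F1 (sin z ^ 2) * (2 * sin z * cos z)) * cos z + (- sin z) * F0 (sin z ^ 2)) (at z)"
    by (rule DERIV_mult[OF a DERIV_cos])
  then show ?thesis unfolding KK_def[abs_def] K1_def
    by (rule DERIV_cong) (simp add: algebra_simps power2_eq_square)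
qed

lemma dK1: assumes "norm (sin z) < 1" shows "(K1 has_field_derivative (-(4/9) * KK z)) (at z)"
proof -
  have w: "norm (sin z ^ 2) < 1" using norm_sin2[OF assms] .
  have a: "((\<lambda>z. F0 (sin z ^ 2)) has_field_derivative F1 (sin z ^ 2) * (2 * sin z * cos z)) (at z)"
    by (rule F0_chain[OF dsin2 w])
  have b: "((\<lambda>z. F1 (sin z ^ 2)) has_field_derivative F2 (sin z ^ 2) * (2 * sin z * cos z)) (at z)"
    by (rule F1_chain[OF dsin2 w])
  have c: "((\<lambda>z. 2 * sin z) has_field_derivative 2 * cos z) (at z)"
    by (rule DERIV_cmult[OF DERIV_sin])
  have d: "((\<lambda>z. 2 * sin z * cos z ^ 2) has_field_derivative (2 * cos z) * cos z ^ 2 + (- 2 * sin z * cos z) * (2 * sin z)) (at z)"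
    by (rule DERIV_mult[OF c dcos2])
  have e: "((\<lambda>z. 2 * sin z * cos z ^ 2 * F1 (sin z ^ 2)) has_field_derivative
     ((2 * cos z) * cos z ^ 2 + (- 2 * sin z * cos z) * (2 * sin z)) * F1 (sin z ^ 2)
     + (F2 (sin z ^ 2) * (2 * sin z * cos z)) * (2 * sin z * cos z ^ 2)) (at z)"
    by (rule DERIV_mult[OF d b])
  have f: "((\<lambda>z. sin z * F0 (sin z ^ 2)) has_field_derivative
     cos z * F0 (sin z ^ 2) + (F1 (sin z ^ 2) * (2 * sin z * cos z)) * sin z) (at z)"
    by (rule DERIV_mult[OF DERIV_sin a])
  have g: "(K1 has_field_derivative
     (((2 * cos z) * cos z ^ 2 + (- 2 * sin z * cos z) * (2 * sin z)) * F1 (sin z ^ 2)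
     + (F2 (sin z ^ 2) * (2 * sin z * cos z)) * (2 * sin z * cos z ^ 2))
     - (cos z * F0 (sin z ^ 2) + (F1 (sin z ^ 2) * (2 * sin z * cos z)) * sin z)) (at z)"
    unfolding K1_def[abs_def] by (rule DERIV_diff[OF e f])
  have ode: "sin z ^ 2 * (1 - sin z ^ 2) * F2 (sin z ^ 2) + (1/2 - 2 * sin z ^ 2) * F1 (sin z ^ 2) - 5/36 * F0 (sin z ^ 2) = 0"
    by (rule F_ode[OF w])
  have sc: "cos z ^ 2 = 1 - sin z ^ 2" by (simp add: cos_squared_eq)
  have "(((2 * cos z) * cos z ^ 2 + (- 2 * sin z * cos z) * (2 * sin z)) * F1 (sin z ^ 2)
     + (F2 (sin z ^ 2) * (2 * sin z * cos z)) * (2 * sin z * cos z ^ 2))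
     - (cos z * F0 (sin z ^ 2) + (F1 (sin z ^ 2) * (2 * sin z * cos z)) * sin z)
     = -(4/9) * KK z + 4 * cos z * (sin z ^ 2 * (1 - sin z ^ 2) * F2 (sin z ^ 2) + (1/2 - 2 * sin z ^ 2) * F1 (sin z ^ 2) - 5/36 * F0 (sin z ^ 2))"
    unfolding KK_def sc by (simp add: algebra_simps power2_eq_square power3_eq_cube)
  also have "\<dots> = -(4/9) * KK z" using ode by simp
  finally have eq: "(((2 * cos z) * cos z ^ 2 + (- 2 * sin z * cos z) * (2 * sin z)) * F1 (sin z ^ 2)
     + (F2 (sin z ^ 2) * (2 * sin z * cos z)) * (2 * sin z * cos z ^ 2))
     - (cos z * F0 (sin z ^ 2) + (F1 (sin z ^ 2) * (2 * sin z * cos z)) * sin z) = -(4/9) * KK z" .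
  show ?thesis using DERIV_cong[OF g eq] .
qed

definition W1 :: "complex \<Rightarrow> complex" where "W1 z = K1 z * cos (2/3*z) + 2/3 * KK z * sin (2/3*z)"
definition W2 :: "complex \<Rightarrow> complex" where "W2 z = K1 z * sin (2/3*z) - 2/3 * KK z * cos (2/3*z)"

lemma KK_chain:
  assumes "(g has_field_derivative g') (at x within s)" "norm (sin (g x)) < 1"
  shows "((\<lambda>x. KK (g x)) has_field_derivative K1 (g x) * g') (at x within s)"
  by (rule DERIV_chain2[OF dKK[OF assms(2)] assms(1)])
lemma K1_chain:
  assumes "(g has_field_derivative g') (at x within s)" "norm (sin (g x)) < 1"
  shows "((\<lambda>x. K1 (g x)) has_field_derivative (-(4/9) * KK (g x)) * g') (at x within s)"
  by (rule DERIV_chain2[OF dK1[OF assms(2)] assms(1)])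

lemma KK_chain':
  assumes "(g has_field_derivative g') (at x within s)" "norm (sin (g x)) < 1" "E = K1 (g x) * g'"
  shows "((\<lambda>x. KK (g x)) has_field_derivative E) (at x within s)"
  using KK_chain[OF assms(1,2)] assms(3) by simp
lemma K1_chain':
  assumes "(g has_field_derivative g') (at x within s)" "norm (sin (g x)) < 1" "E = (-(4/9) * KK (g x)) * g'"
  shows "((\<lambda>x. K1 (g x)) has_field_derivative E) (at x within s)"
  using K1_chain[OF assms(1,2)] assms(3) by simp

lemma sin23_chain: "(g has_field_derivative g') (at x within s) \<Longrightarrow>
  ((\<lambda>x. sin (2/3 * g x)) has_field_derivative cos (2/3 * g x) * (2/3 * g')) (at x within s)"
  by (rule DERIV_chain2[OF DERIV_sin DERIV_cmult])
lemma cos23_chain: "(g has_field_derivative g') (at x within s) \<Longrightarrow>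
  ((\<lambda>x. cos (2/3 * g x)) has_field_derivative - sin (2/3 * g x) * (2/3 * g')) (at x within s)"
  by (rule DERIV_chain2[OF DERIV_cos DERIV_cmult])

lemma alg_W1: "((-(4/9) * k) * g' * c + (- s * (2/3 * g')) * k1)
     + ((2/3 * (k1 * g')) * s + (c * (2/3 * g')) * (2/3 * k)) = (0::complex)"
  by (simp add: algebra_simps)
lemma alg_W2: "((-(4/9) * k) * g' * s + (c * (2/3 * g')) * k1)
     - ((2/3 * (k1 * g')) * c + (- s * (2/3 * g')) * (2/3 * k)) = (0::complex)"
  by (simp add: algebra_simps)

lemma W1_chain:
  assumes "(g has_field_derivative g') (at x within s)" "norm (sin (g x)) < 1"
  shows "((\<lambda>x. W1 (g x)) has_field_derivative 0) (at x within s)"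
proof -
  note d = DERIV_add[OF DERIV_mult[OF K1_chain[OF assms] cos23_chain[OF assms(1)]]
          DERIV_mult[OF DERIV_cmult[where c="2/3", OF KK_chain[OF assms]] sin23_chain[OF assms(1)]]]
  note d1 = DERIV_mult[OF K1_chain[OF assms] cos23_chain[OF assms(1)]]
  note d2 = DERIV_cmult[where c="2/3", OF KK_chain[OF assms]]
  note d3 = DERIV_mult[OF d2 sin23_chain[OF assms(1)]]
  note d4 = DERIV_add[OF d1 d3]
  note d5 = DERIV_cong[OF d4 alg_W1]
  show ?thesis unfolding W1_def by (rule d5)
qed

lemma W2_chain:
  assumes "(g has_field_derivative g') (at x within s)" "norm (sin (g x)) < 1"
  shows "((\<lambda>x. W2 (g x)) has_field_derivative 0) (at x within s)"
proof -
  note d = DERIV_diff[OF DERIV_mult[OF K1_chain[OF assms] sin23_chain[OF assms(1)]]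
          DERIV_mult[OF DERIV_cmult[where c="2/3", OF KK_chain[OF assms]] cos23_chain[OF assms(1)]]]
  show ?thesis unfolding W2_def by (rule DERIV_cong[OF d alg_W2])
qed

lemma F0_0: "F0 0 = 1" by (simp add: F0_def cF_0)
lemma W1_0: "W1 0 = 0" by (simp add: W1_def K1_def KK_def)
lemma W2_0: "W2 0 = -2/3" by (simp add: W2_def K1_def KK_def F0_0)

lemma alg_K: "(b::complex) * (k1 * a + 2/3 * k * b) - a * (k1 * b - 2/3 * k * a) = 2/3 * k * (b^2 + a^2)"
  by (simp add: algebra_simps power2_eq_square)

lemma KK_from_W: "W1 z = 0 \<Longrightarrow> W2 z = -2/3 \<Longrightarrow> KK z = cos (2/3 * z)"
proof -
  assume a: "W1 z = 0" "W2 z = -2/3"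
  have "sin (2/3*z) * W1 z - cos (2/3*z) * W2 z = 2/3 * KK z * (sin (2/3*z)^2 + cos (2/3*z)^2)"
    unfolding W1_def W2_def by (rule alg_K)
  also have "\<dots> = 2/3 * KK z" by (simp only: sin_cos_squared_add mult_1_right)
  finally show ?thesis using a by simp
qed

lemma F56_F0: "F56 = F0"
  by (rule ext) (simp add: F56_eq F0_def)

lemma F0_hol: "F0 holomorphic_on ball 0 1"
  unfolding holomorphic_on_open[OF open_ball] using dF0 by (auto intro!: exI)

lemma Re_pos: "norm (t::complex) < 1 \<Longrightarrow> Re (1 - t^2) > 0"
proof -
  assume a: "norm t < 1"
  have "Re (t^2) \<le> norm (t^2)" by (rule complex_Re_le_cmod)
  also have "norm (t^2) < 1"
  proof -
    have "norm t * norm t < 1 * 1" using a by (intro mult_strict_mono) auto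
    then show ?thesis by (simp add: norm_power power2_eq_square norm_mult)
  qed
  finally show ?thesis by simp
qed

definition ff :: "real \<Rightarrow> complex \<Rightarrow> complex" where
  "ff k t = F56 (complex_of_real (k\<^sup>2) * t\<^sup>2) / csqrt (1 - t\<^sup>2)"

lemma ff_hol:
  assumes "0 < k" "k < 1"
  shows "ff k holomorphic_on ball 0 1"
proof -
  have g: "(\<lambda>t. complex_of_real (k\<^sup>2) * t\<^sup>2) holomorphic_on ball 0 1" by (intro holomorphic_intros)
  have img: "(\<lambda>t. complex_of_real (k\<^sup>2) * t\<^sup>2) ` ball 0 1 \<subseteq> ball 0 1"
  proof
    fix y assume "y \<in> (\<lambda>t. complex_of_real (k\<^sup>2) * t\<^sup>2) ` ball 0 1"
    then obtain t where t: "norm t < 1" and y: "y = complex_of_real (k\<^sup>2) * t\<^sup>2" by auto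
    have "norm y = k^2 * norm t ^ 2" using y by (simp add: norm_mult norm_power)
    also have "\<dots> \<le> 1 * norm t ^ 2" using assms
      by (intro mult_right_mono) (auto simp: power_le_one)
    also have "\<dots> < 1"
    proof -
      have "norm t * norm t < 1 * 1" using t by (intro mult_strict_mono) auto
      then show ?thesis by (simp add: power2_eq_square)
    qed
    finally show "y \<in> ball 0 1" by simp
  qed
  have num: "(\<lambda>t. F0 (complex_of_real (k\<^sup>2) * t\<^sup>2)) holomorphic_on ball 0 1"
    using holomorphic_on_compose_gen[OF g F0_hol img] by (simp add: o_def)
  have den: "(\<lambda>t. csqrt (1 - t\<^sup>2)) holomorphic_on ball 0 1"
  proof (rule holomorphic_on_csqrt')
    show "(\<lambda>t. 1 - t\<^sup>2) holomorphic_on ball 0 1" by (intro holomorphic_intros)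
    fix z assume "z \<in> ball (0::complex) 1"
    then have "Re (1 - z^2) > 0" by (intro Re_pos) simp
    then show "1 - z\<^sup>2 \<notin> \<real>\<^sub>\<le>\<^sub>0" by (auto simp: complex_nonpos_Reals_iff)
  qed
  have nz: "csqrt (1 - z\<^sup>2) \<noteq> 0" if "z \<in> ball 0 1" for z
  proof -
    have "Re (1 - z^2) > 0" using that by (intro Re_pos) simp
    then have "1 - z^2 \<noteq> 0" by auto
    then show ?thesis by simp
  qed
  show ?thesis unfolding ff_def[abs_def] F56_F0
    by (rule holomorphic_on_divide[OF num den nz])
qed

lemma G_deriv:
  assumes "0 < k" "k < 1" "norm w < 1"
  shows "((\<lambda>x. contour_integral (linepath 0 x) (ff k)) has_field_derivative ff k w) (at w)"
proof (rule triangle_contour_integrals_starlike_primitive[where S="ball 0 1"])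
  have hol: "ff k holomorphic_on ball 0 1" by (rule ff_hol[OF assms(1,2)])
  show "continuous_on (ball 0 1) (ff k)" by (rule holomorphic_on_imp_continuous_on[OF hol])
  show "0 \<in> ball (0::complex) 1" "open (ball (0::complex) 1)" by auto
  show "w \<in> ball 0 1" using assms(3) by simp
  show "closed_segment 0 y \<subseteq> ball 0 1" if "y \<in> ball 0 1" for y :: complex
    using that by (intro closed_segment_subset) (auto simp: convex_ball)
  show "contour_integral (linepath 0 b) (ff k) + contour_integral (linepath b c) (ff k) +
        contour_integral (linepath c 0) (ff k) = 0" if "closed_segment b c \<subseteq> ball 0 1" for b c :: complex
  proof -
    have "b \<in> ball 0 1" "c \<in> ball 0 1" using that by auto
    then have "convex hull {0, b, c} \<subseteq> ball 0 1"
      by (intro hull_minimal) (auto simp: convex_ball)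
    then have "ff k holomorphic_on convex hull {0, b, c}" using holomorphic_on_subset[OF hol] by blast
    then show ?thesis by (rule has_chain_integral_chain_integral3[OF Cauchy_theorem_triangle])
  qed
qed

lemma u_of_phi_eq: "u_of_phi k p = contour_integral (linepath 0 (sin p)) (ff k)"
  unfolding u_of_phi_def ff_def[abs_def] ..

lemma final_alg:
  fixes qX qp qd qc qs qk ql :: complex
  assumes "qX * qp^2 = qd^2" "qc^2 = 1 - qs^2" "qd^2 = 1 - qk*qs^2" "ql = 1 - qk"
  shows "qX*(2*qs*qc*qp)^2 = 4*qs^2*(1-qs^2)*(1-qk*qs^2)"
    and "qX*(-2*qs*qc*qp)^2 = 4*qc^2*(1-qc^2)*(ql + qk*qc^2)"
    and "qX*(0 - qk*(2*qs*qc*qp))^2 = 4*qd^2*(1-qd^2)*(qd^2 - ql)"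
proof -
  have e1: "qX*(2*qs*qc*qp)^2 = 4*qs^2*qc^2*(qX*qp^2)" by (simp add: algebra_simps power2_eq_square)
  have e2: "qX*(-2*qs*qc*qp)^2 = 4*qs^2*qc^2*(qX*qp^2)" by (simp add: algebra_simps power2_eq_square)
  have e3: "qX*(0 - qk*(2*qs*qc*qp))^2 = 4*qk^2*qs^2*qc^2*(qX*qp^2)" by (simp add: algebra_simps power2_eq_square)
  show "qX*(2*qs*qc*qp)^2 = 4*qs^2*(1-qs^2)*(1-qk*qs^2)" unfolding e1 assms(1) assms(2,3) by simp
  show "qX*(-2*qs*qc*qp)^2 = 4*qc^2*(1-qc^2)*(ql + qk*qc^2)" unfolding e2 assms(1) assms(2,3,4)
    by (simp add: algebra_simps)
  show "qX*(0 - qk*(2*qs*qc*qp))^2 = 4*qd^2*(1-qd^2)*(qd^2 - ql)" unfolding e3 assms(1) assms(2,3,4)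
    by (simp add: algebra_simps power2_eq_square)
qed

theorem theorem5:
  fixes \<kappa> lam r :: real and \<phi> \<psi> :: "complex \<Rightarrow> complex"
  assumes "0 < \<kappa>" and "\<kappa> < 1" and "lam = sqrt (1 - \<kappa>\<^sup>2)"
    and "0 < r"
    and "\<phi> holomorphic_on ball 0 r" and "\<phi> 0 = 0"
    and "\<forall>u\<in>ball 0 r. norm (sin (\<phi> u)) < 1"
    and "\<forall>u\<in>ball 0 r. u_of_phi \<kappa> (\<phi> u) = u"
    and "\<psi> holomorphic_on ball 0 r" and "\<psi> 0 = 0"
    and "\<forall>u\<in>ball 0 r. sin (\<psi> u) = complex_of_real \<kappa> * sin (\<phi> u)"
  shows "\<forall>u\<in>ball 0 r.
    let S = (\<lambda>v. (sin (\<phi> v))\<^sup>2); C = (\<lambda>v. (cos (\<phi> v))\<^sup>2);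
        D = (\<lambda>v. (cos (\<psi> v))\<^sup>2); dd = cos (2/3 * \<psi> u);
        k2 = complex_of_real (\<kappa>\<^sup>2); l2 = complex_of_real (lam\<^sup>2)
    in dd\<^sup>2 * (deriv S u)\<^sup>2 = 4 * S u * (1 - S u) * (1 - k2 * S u)
     \<and> dd\<^sup>2 * (deriv C u)\<^sup>2 = 4 * C u * (1 - C u) * (l2 + k2 * C u)
     \<and> dd\<^sup>2 * (deriv D u)\<^sup>2 = 4 * D u * (1 - D u) * (D u - l2)"
proof
  fix u :: complex assume u: "u \<in> ball 0 r"
  note k0 = assms(1) and k1 = assms(2)
  let ?B = "ball (0::complex) r"
  have dphi: "\<And>v T. v \<in> ?B \<Longrightarrow> (\<phi> has_field_derivative deriv \<phi> v) (at v within T)"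
    by (rule holomorphic_derivI[OF assms(5) open_ball])
  have dpsi: "\<And>v T. v \<in> ?B \<Longrightarrow> (\<psi> has_field_derivative deriv \<psi> v) (at v within T)"
    by (rule holomorphic_derivI[OF assms(9) open_ball])
  have sinpsi: "norm (sin (\<psi> v)) < 1" if "v \<in> ?B" for v
  proof -
    have "norm (sin (\<psi> v)) = \<kappa> * norm (sin (\<phi> v))"
      using assms(11) that k0 by (simp add: norm_mult)
    also have "\<dots> \<le> 1 * norm (sin (\<phi> v))" using k1 by (intro mult_right_mono) auto
    also have "\<dots> < 1" using assms(7) that by simp
    finally show ?thesis .
  qed
  have zB: "0 \<in> ?B" using assms(4) by simp
  obtain c1 where c1: "\<forall>x\<in>?B. W1 (\<psi> x) = c1"
    using has_field_derivative_zero_constant[where s="?B" and f="\<lambda>x. W1 (\<psi> x)", OF convex_ball]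
      W1_chain[OF dpsi sinpsi] by blast
  obtain c2 where c2: "\<forall>x\<in>?B. W2 (\<psi> x) = c2"
    using has_field_derivative_zero_constant[where s="?B" and f="\<lambda>x. W2 (\<psi> x)", OF convex_ball]
      W2_chain[OF dpsi sinpsi] by blast
  have "c1 = 0" using bspec[OF c1 zB] assms(10) W1_0 by simp
  have "c2 = -2/3" using bspec[OF c2 zB] assms(10) W2_0 by simp
  have KKu: "KK (\<psi> u) = cos (2/3 * \<psi> u)"
    using KK_from_W c1 c2 u \<open>c1 = 0\<close> \<open>c2 = -2/3\<close> by auto
  define s where "s = sin (\<phi> u)"
  define c where "c = cos (\<phi> u)"
  define d where "d = cos (\<psi> u)"
  define p where "p = deriv \<phi> u"
  define Fv where "Fv = F0 (complex_of_real (\<kappa>\<^sup>2) * s\<^sup>2)"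
  have sin2psi: "sin (\<psi> u) ^ 2 = complex_of_real (\<kappa>\<^sup>2) * s\<^sup>2"
    using assms(11) u by (simp add: s_def power_mult_distrib)
  have dd: "cos (2/3 * \<psi> u) = Fv * d"
    using KKu unfolding KK_def Fv_def d_def sin2psi by simp
  have ns: "norm (sin (\<phi> u)) < 1" using assms(7) u by simp
  have h: "((\<lambda>v. contour_integral (linepath 0 (sin (\<phi> v))) (ff \<kappa>)) has_field_derivative
            ff \<kappa> (sin (\<phi> u)) * (cos (\<phi> u) * deriv \<phi> u)) (at u)"
    by (rule DERIV_chain2[OF G_deriv[OF k0 k1 ns] DERIV_chain2[OF DERIV_sin dphi[OF u]]])
  have h2: "((\<lambda>v. v) has_field_derivative ff \<kappa> (sin (\<phi> u)) * (cos (\<phi> u) * deriv \<phi> u)) (at u)"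
    by (rule has_field_derivative_transform_within_open[OF h open_ball u])
       (use assms(8) in \<open>simp add: u_of_phi_eq\<close>)
  have one: "ff \<kappa> s * (c * p) = 1"
    using DERIV_unique[OF h2 DERIV_ident] unfolding s_def c_def p_def .
  have Re: "Re (1 - s^2) > 0" using Re_pos ns s_def by simp
  then have nz: "csqrt (1 - s^2) \<noteq> 0" by auto
  have eq2: "Fv * c * p = csqrt (1 - s^2)"
    using one nz unfolding ff_def F56_F0 Fv_def by (simp add: field_simps)
  have cs: "c^2 = 1 - s^2" unfolding c_def s_def by (simp add: cos_squared_eq)
  have "(Fv * c * p)^2 = 1 - s^2" unfolding eq2 by simp
  then have "c^2 * (Fv^2 * p^2) = c^2" unfolding cs[symmetric] by (simp add: power_mult_distrib algebra_simps)
  moreover have "c \<noteq> 0" using one by auto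
  ultimately have Fp: "Fv^2 * p^2 = 1" by simp
  have key: "cos (2/3 * \<psi> u) ^ 2 * p^2 = d^2" unfolding dd
    using Fp by (simp add: power_mult_distrib algebra_simps)
  have ds: "d^2 = 1 - complex_of_real (\<kappa>\<^sup>2) * s^2"
    unfolding d_def cos_squared_eq sin2psi ..
  have lam: "complex_of_real (lam\<^sup>2) = 1 - complex_of_real (\<kappa>\<^sup>2)"
  proof -
    have "\<kappa>^2 \<le> 1" using k0 k1 by (simp add: power_le_one)
    then have "lam^2 = 1 - \<kappa>^2" using assms(3) by simp
    then show ?thesis by simp
  qed
  have dS: "((\<lambda>v. (sin (\<phi> v))\<^sup>2) has_field_derivative 2 * s * c * p) (at u)"
    using DERIV_chain2[OF dsin2 dphi[OF u]] unfolding s_def c_def p_def by simp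
  have dC: "((\<lambda>v. (cos (\<phi> v))\<^sup>2) has_field_derivative - 2 * s * c * p) (at u)"
    using DERIV_chain2[OF dcos2 dphi[OF u]] unfolding s_def c_def p_def by simp
  have dD0: "((\<lambda>v. 1 - complex_of_real (\<kappa>\<^sup>2) * (sin (\<phi> v))\<^sup>2) has_field_derivative
      0 - complex_of_real (\<kappa>\<^sup>2) * (2 * s * c * p)) (at u)"
    by (rule DERIV_diff[OF DERIV_const DERIV_cmult[OF dS]])
  have dD: "((\<lambda>v. (cos (\<psi> v))\<^sup>2) has_field_derivative
      0 - complex_of_real (\<kappa>\<^sup>2) * (2 * s * c * p)) (at u)"
  proof (rule has_field_derivative_transform_within_open[OF dD0 open_ball u])
    fix x assume "x \<in> ?B"
    then show "1 - complex_of_real (\<kappa>\<^sup>2) * (sin (\<phi> x))\<^sup>2 = (cos (\<psi> x))\<^sup>2"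
      using assms(11) by (simp add: cos_squared_eq power_mult_distrib)
  qed
  note fa = final_alg[OF key cs ds lam]
  show "let S = (\<lambda>v. (sin (\<phi> v))\<^sup>2); C = (\<lambda>v. (cos (\<phi> v))\<^sup>2);
        D = (\<lambda>v. (cos (\<psi> v))\<^sup>2); dd = cos (2/3 * \<psi> u);
        k2 = complex_of_real (\<kappa>\<^sup>2); l2 = complex_of_real (lam\<^sup>2)
    in dd\<^sup>2 * (deriv S u)\<^sup>2 = 4 * S u * (1 - S u) * (1 - k2 * S u)
     \<and> dd\<^sup>2 * (deriv C u)\<^sup>2 = 4 * C u * (1 - C u) * (l2 + k2 * C u)
     \<and> dd\<^sup>2 * (deriv D u)\<^sup>2 = 4 * D u * (1 - D u) * (D u - l2)"
    unfolding Let_def DERIV_imp_deriv[OF dS] DERIV_imp_deriv[OF dC] DERIV_imp_deriv[OF dD]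
    using fa unfolding s_def[symmetric] c_def[symmetric] d_def[symmetric] by simp
qed

end
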